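(* (i) Let $\epsilon>0$ and $J_u\in\mathbb{R}^{|\mathcal{X}|}$ with $\sum_xJ_u(x)=0$ and $\sum_x|J_u(x)|\le1$. Then every vector in $\mathbb{S}_u=\{y\in\mathbb{R}^{|\mathcal{Y}|}: My=MP_Y+\epsilon M\begin{bmatrix}P_{X|Y_1}^{-1}J_u\\0\end{bmatrix},\ y\ge0\}$ is a probability vector (nonnegative entries summing to one). (ii) Let $(U,Y)$ be a pair of random variables, $U$ on a finite alphabet $\mathcal{U}$, with $Y$-marginal $P_Y$, and let $\{J_u\}_{u\in\mathcal{U}}$ satisfy (P1), (P2), (P3) and $P_{Y|U=u}\in\mathbb{S}_u$ for all $u\in\mathcal{U}$. Define $X$ through $P_{XYU}(x,y,u)=P_{X|Y}(x|y)P_{YU}(y,u)$, so that $X-Y-U$ is a Markov chain. Then $P_{X|U=u}-P_X=\epsilon J_u$ for all $u$.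
   Context: Setting: $X,Y$ on finite alphabets with $|\mathcal{X}|<|\mathcal{Y}|$, joint pmf $P_{XY}$, marginal vectors $P_X,P_Y$ with positive entries. $P_{X|Y}\in\mathbb{R}^{|\mathcal{X}|\times|\mathcal{Y}|}$ (columns are the distributions $P_{X|Y=y}$) has full row rank and $P_{X|Y}=[P_{X|Y_1},P_{X|Y_2}]$ with $P_{X|Y_1}$ (first $|\mathcal{X}|$ columns) invertible. With an SVD $P_{X|Y}=U\Sigma V^T$, $V=[v_1,\dots,v_{|\mathcal{Y}|}]$, set $M=[v_1,\dots,v_{|\mathcal{X}|}]^T$. The zero block has size $|\mathcal{Y}|-|\mathcal{X}|$. Properties: (P1) $\sum_x J_u(x)=0$ for all $u$; (P2) $\sum_u P_U(u)J_u(x)=0$ for all $x$; (P3) $\sum_x|J_u(x)|\le1$ for all $u$. *)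

theory Defs
  imports "Jordan_Normal_Form.Gauss_Jordan_Elimination"
begin

text \<open>Alphabets: X = {0..<n}, Y = {0..<m}. The joint pmf P_XY is an n x m matrix.\<close>

definition marg_Y :: "real mat \<Rightarrow> real vec" where
  "marg_Y PXY = vec (dim_col PXY) (\<lambda>y. \<Sum>x<dim_row PXY. PXY $$ (x, y))"

definition marg_X :: "real mat \<Rightarrow> real vec" where
  "marg_X PXY = vec (dim_row PXY) (\<lambda>x. \<Sum>y<dim_col PXY. PXY $$ (x, y))"

definition cond_XgY :: "real mat \<Rightarrow> real mat" where
  "cond_XgY PXY = mat (dim_row PXY) (dim_col PXY)
     (\<lambda>(x, y). PXY $$ (x, y) / marg_Y PXY $ y)"

definition first_block :: "real mat \<Rightarrow> real mat" where
  "first_block A = mat (dim_row A) (dim_row A) (\<lambda>(i, j). A $$ (i, j))"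

definition is_svd :: "real mat \<Rightarrow> real mat \<Rightarrow> real mat \<Rightarrow> real mat \<Rightarrow> bool" where
  "is_svd A U Sig V \<longleftrightarrow>
     U \<in> carrier_mat (dim_row A) (dim_row A) \<and>
     V \<in> carrier_mat (dim_col A) (dim_col A) \<and>
     Sig \<in> carrier_mat (dim_row A) (dim_col A) \<and>
     U * transpose_mat U = 1\<^sub>m (dim_row A) \<and> transpose_mat U * U = 1\<^sub>m (dim_row A) \<and>
     V * transpose_mat V = 1\<^sub>m (dim_col A) \<and> transpose_mat V * V = 1\<^sub>m (dim_col A) \<and>
     (\<forall>i<dim_row A. \<forall>j<dim_col A. i \<noteq> j \<longrightarrow> Sig $$ (i, j) = 0) \<and>
     (\<forall>i<min (dim_row A) (dim_col A). Sig $$ (i, i) \<ge> 0) \<and>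
     (\<forall>i j. i \<le> j \<and> j < min (dim_row A) (dim_col A) \<longrightarrow> Sig $$ (j, j) \<le> Sig $$ (i, i)) \<and>
     A = U * Sig * transpose_mat V"

definition M_of :: "nat \<Rightarrow> real mat \<Rightarrow> real mat" where
  "M_of n V = mat n (dim_row V) (\<lambda>(i, j). V $$ (j, i))"

definition lift_vec :: "real mat \<Rightarrow> real vec \<Rightarrow> real vec" where
  "lift_vec PXgY J = (let w = the (mat_inverse (first_block PXgY)) *\<^sub>v J in
     vec (dim_col PXgY) (\<lambda>j. if j < dim_row PXgY then w $ j else 0))"

definition S_set :: "real mat \<Rightarrow> real mat \<Rightarrow> real \<Rightarrow> real vec \<Rightarrow> real vec set" where
  "S_set PXY V eps J =
    (let P = cond_XgY PXY; M = M_of (dim_row PXY) V in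
     {y \<in> carrier_vec (dim_col PXY).
        M *\<^sub>v y = M *\<^sub>v marg_Y PXY + eps \<cdot>\<^sub>v (M *\<^sub>v lift_vec P J) \<and>
        (\<forall>j<dim_col PXY. y $ j \<ge> 0)})"

definition is_prob_vec :: "real vec \<Rightarrow> bool" where
  "is_prob_vec y \<longleftrightarrow> (\<forall>j<dim_vec y. y $ j \<ge> 0) \<and> (\<Sum>j<dim_vec y. y $ j) = 1"

end

theory Submission
  imports Defs
begin

lemma inv_units:
  fixes A :: "real mat"
  assumes "A \<in> carrier_mat n n" "invertible_mat A"
  shows "A \<in> Units (ring_mat TYPE(real) n b)"
proof -
  from assms(2) obtain B where AB: "A * B = 1\<^sub>m (dim_row A)" "B * A = 1\<^sub>m (dim_row B)"
    unfolding invertible_mat_def inverts_mat_def by blast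
  have "dim_col B = n" using arg_cong[OF AB(1), of dim_col] assms(1) by simp
  moreover have "dim_row B = n" using arg_cong[OF AB(2), of dim_col] assms(1) by simp
  ultimately have "B \<in> carrier_mat n n" by auto
  then show ?thesis using assms AB unfolding Units_def ring_mat_def by auto
qed

lemma first_block_inv:
  fixes A :: "real mat"
  assumes "A \<in> carrier_mat n m" "invertible_mat (first_block A)"
  obtains B where "first_block A * B = 1\<^sub>m n" "B \<in> carrier_mat n n"
    "the (mat_inverse (first_block A)) = B"
proof -
  have FB: "first_block A \<in> carrier_mat n n" using assms(1) unfolding first_block_def by auto
  have "mat_inverse (first_block A) \<noteq> None"
  proof
    assume "mat_inverse (first_block A) = None"
    then have "first_block A \<notin> Units (ring_mat TYPE(real) n ())"
      by (rule mat_inverse(1)[OF FB])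
    moreover have "first_block A \<in> Units (ring_mat TYPE(real) n ())"
      by (rule inv_units[OF FB assms(2)])
    ultimately show False by simp
  qed
  then obtain B where "mat_inverse (first_block A) = Some B" by auto
  with mat_inverse(2)[OF FB this] show ?thesis using that by auto
qed

lemma P_lift:
  fixes P :: "real mat"
  assumes P: "P \<in> carrier_mat n m" and nm: "n \<le> m" and inv: "invertible_mat (first_block P)"
    and J: "J \<in> carrier_vec n"
  shows "P *\<^sub>v lift_vec P J = J"
proof -
  obtain B where B: "first_block P * B = 1\<^sub>m n" "B \<in> carrier_mat n n"
    "the (mat_inverse (first_block P)) = B" using first_block_inv[OF P inv] by blast
  define w where "w = B *\<^sub>v J"
  have FB: "first_block P \<in> carrier_mat n n" using P unfolding first_block_def by auto
  have w: "w \<in> carrier_vec n" using B J unfolding w_def by auto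
  have "first_block P *\<^sub>v w = J"
  proof -
    have "first_block P *\<^sub>v (B *\<^sub>v J) = (first_block P * B) *\<^sub>v J"
      by (rule assoc_mult_mat_vec[OF FB B(2) J, symmetric])
    also have "\<dots> = J" unfolding B(1) using J by simp
    finally show ?thesis unfolding w_def .
  qed
  have L: "lift_vec P J = vec m (\<lambda>j. if j < n then w $ j else 0)"
    using P B unfolding lift_vec_def w_def Let_def by auto
  show ?thesis
  proof (rule eq_vecI)
    show "dim_vec (P *\<^sub>v lift_vec P J) = dim_vec J" using P J by auto
    fix i assume i: "i < dim_vec J"
    have "(P *\<^sub>v lift_vec P J) $ i = (\<Sum>j<m. P $$ (i,j) * (if j < n then w $ j else 0))"
      using P i J L by (auto simp: scalar_prod_def lessThan_atLeast0)
    also have "\<dots> = (\<Sum>j<n. P $$ (i,j) * w $ j)"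
    proof -
      have "(\<Sum>j<m. P $$ (i,j) * (if j < n then w $ j else 0)) = (\<Sum>j\<in>{..<m} \<inter> {j. j<n}. P $$ (i,j) * w $ j)"
        by (subst sum.inter_restrict) (auto intro: sum.cong)
      also have "{..<m} \<inter> {j. j<n} = {..<n}" using nm by auto
      finally show ?thesis .
    qed
    also have "\<dots> = (first_block P *\<^sub>v w) $ i"
      using P i J w unfolding first_block_def by (auto simp: scalar_prod_def lessThan_atLeast0)
    also have "\<dots> = J $ i" using \<open>first_block P *\<^sub>v w = J\<close> by simp
    finally show "(P *\<^sub>v lift_vec P J) $ i = J $ i" .
  qed
qed

lemma svd_kernel:
  fixes P :: "real mat"
  assumes P: "P \<in> carrier_mat n m" and nm: "n \<le> m" and svd: "is_svd P U Sig V"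
    and d: "d \<in> carrier_vec m" and Md: "M_of n V *\<^sub>v d = 0\<^sub>v n"
  shows "P *\<^sub>v d = 0\<^sub>v n"
proof -
  have U: "U \<in> carrier_mat n n" and V: "V \<in> carrier_mat m m" and S: "Sig \<in> carrier_mat n m"
    and Sd: "\<forall>i<n. \<forall>j<m. i \<noteq> j \<longrightarrow> Sig $$ (i, j) = 0"
    and Pe: "P = U * Sig * transpose_mat V"
    using svd P unfolding is_svd_def by auto
  define e where "e = transpose_mat V *\<^sub>v d"
  have e: "e \<in> carrier_vec m" using V d unfolding e_def by auto
  have e0: "e $ i = 0" if "i < n" for i
  proof -
    have "e $ i = (M_of n V *\<^sub>v d) $ i"
      using that V d nm unfolding e_def M_of_def by (auto simp: scalar_prod_def)
    then show ?thesis using Md that by simp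
  qed
  have Se: "Sig *\<^sub>v e = 0\<^sub>v n"
  proof (rule eq_vecI)
    fix i assume "i < dim_vec (0\<^sub>v n :: real vec)"
    then have i: "i < n" by simp
    have "(Sig *\<^sub>v e) $ i = (\<Sum>j<m. Sig $$ (i,j) * e $ j)"
      using S e i by (auto simp: scalar_prod_def lessThan_atLeast0)
    also have "\<dots> = 0"
      by (rule sum.neutral) (use Sd i e0 in auto)
    finally show "(Sig *\<^sub>v e) $ i = 0\<^sub>v n $ i" using i by simp
  qed (use S in auto)
  have VT: "transpose_mat V \<in> carrier_mat m m" using V by simp
  have US: "U * Sig \<in> carrier_mat n m" using U S by simp
  have "P *\<^sub>v d = (U * Sig) *\<^sub>v (transpose_mat V *\<^sub>v d)"
    unfolding Pe by (rule assoc_mult_mat_vec[OF US VT d])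
  also have "\<dots> = U *\<^sub>v (Sig *\<^sub>v e)"
    unfolding e_def by (rule assoc_mult_mat_vec[OF U S e[unfolded e_def]])
  finally have "P *\<^sub>v d = U *\<^sub>v (Sig *\<^sub>v e)" .
  moreover have "U *\<^sub>v 0\<^sub>v n = 0\<^sub>v n"
    by (rule eq_vecI) (use U in \<open>auto simp: scalar_prod_def\<close>)
  ultimately show ?thesis using Se by simp
qed


lemma S_key:
  fixes PXY U Sig V :: "real mat" and eps :: real
  assumes nm: "n \<le> m" and PXY: "PXY \<in> carrier_mat n m"
    and PY_pos: "\<forall>y<m. marg_Y PXY $ y > 0"
    and inv: "invertible_mat (first_block (cond_XgY PXY))"
    and svd: "is_svd (cond_XgY PXY) U Sig V"
    and J: "J \<in> carrier_vec n"
    and y: "y \<in> S_set PXY V eps J"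
  shows "y \<in> carrier_vec m" "\<forall>j<m. y $ j \<ge> 0"
    "cond_XgY PXY *\<^sub>v y = marg_X PXY + eps \<cdot>\<^sub>v J"
    "\<forall>y<m. (\<Sum>x<n. cond_XgY PXY $$ (x, y)) = 1"
proof -
  define P where "P = cond_XgY PXY"
  define M where "M = M_of n V"
  define L where "L = lift_vec P J"
  define PY where "PY = marg_Y PXY"
  have Pc: "P \<in> carrier_mat n m" using PXY unfolding P_def cond_XgY_def by auto
  have Vc: "V \<in> carrier_mat m m" using svd Pc unfolding P_def[symmetric] is_svd_def by auto
  have Mc: "M \<in> carrier_mat n m" using Vc unfolding M_def M_of_def by auto
  have PYc: "PY \<in> carrier_vec m" using PXY unfolding PY_def marg_Y_def by auto
  have Lc: "L \<in> carrier_vec m" using Pc unfolding L_def lift_vec_def Let_def by auto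
  from y have yc: "y \<in> carrier_vec m" and ynn: "\<forall>j<m. y $ j \<ge> 0"
    and My: "M *\<^sub>v y = M *\<^sub>v PY + eps \<cdot>\<^sub>v (M *\<^sub>v L)"
    using PXY unfolding S_set_def Let_def P_def[symmetric] M_def PY_def L_def by auto
  show "y \<in> carrier_vec m" "\<forall>j<m. y $ j \<ge> 0" using yc ynn by auto
  define d where "d = y - PY - eps \<cdot>\<^sub>v L"
  have dc: "d \<in> carrier_vec m" using yc PYc Lc unfolding d_def by auto
  have "M *\<^sub>v d = M *\<^sub>v y - M *\<^sub>v PY - eps \<cdot>\<^sub>v (M *\<^sub>v L)"
    unfolding d_def using Mc yc PYc Lc
    by (simp add: mult_minus_distrib_mat_vec mult_mat_vec)
  also have "\<dots> = 0\<^sub>v n" unfolding My using Mc PYc Lc by auto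
  finally have "M *\<^sub>v d = 0\<^sub>v n" .
  then have Pd: "P *\<^sub>v d = 0\<^sub>v n"
    using svd_kernel[OF Pc nm svd[folded P_def] dc] unfolding M_def by auto
  have PL: "P *\<^sub>v L = J" unfolding L_def using P_lift[OF Pc nm inv[folded P_def] J] .
  have PPY: "P *\<^sub>v PY = marg_X PXY"
  proof (rule eq_vecI)
    fix x assume "x < dim_vec (marg_X PXY)"
    then have x: "x < n" using PXY unfolding marg_X_def by auto
    have "(P *\<^sub>v PY) $ x = (\<Sum>j<m. PXY $$ (x, j) / marg_Y PXY $ j * marg_Y PXY $ j)"
      using x Pc PYc PXY unfolding P_def PY_def
      by (auto simp: scalar_prod_def lessThan_atLeast0 cond_XgY_def marg_Y_def)
    also have "\<dots> = (\<Sum>j<m. PXY $$ (x, j))"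
      by (rule sum.cong) (use PY_pos in auto)
    finally show "(P *\<^sub>v PY) $ x = marg_X PXY $ x"
      using x PXY unfolding marg_X_def by auto
  qed (use Pc PXY in \<open>auto simp: marg_X_def\<close>)
  have "P *\<^sub>v y = P *\<^sub>v (d + PY + eps \<cdot>\<^sub>v L)"
    unfolding d_def using yc PYc Lc by (intro arg_cong[where f="\<lambda>v. P *\<^sub>v v"]) auto
  also have "\<dots> = P *\<^sub>v d + P *\<^sub>v PY + eps \<cdot>\<^sub>v (P *\<^sub>v L)"
    using Pc dc PYc Lc by (simp add: mult_add_distrib_mat_vec mult_mat_vec) (rule assoc_add_vec[symmetric, where n=n], auto)
  also have "\<dots> = marg_X PXY + eps \<cdot>\<^sub>v J"
    unfolding Pd PL PPY using J PXY by (auto simp: marg_X_def)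
  finally show "cond_XgY PXY *\<^sub>v y = marg_X PXY + eps \<cdot>\<^sub>v J" unfolding P_def .
  show "\<forall>y<m. (\<Sum>x<n. cond_XgY PXY $$ (x, y)) = 1"
  proof (intro allI impI)
    fix j assume j: "j < m"
    have "(\<Sum>x<n. cond_XgY PXY $$ (x, j)) = (\<Sum>x<n. PXY $$ (x, j)) / marg_Y PXY $ j"
      using j PXY by (auto simp: cond_XgY_def sum_divide_distrib)
    also have "\<dots> = 1" using PY_pos j PXY by (auto simp: marg_Y_def)
    finally show "(\<Sum>x<n. cond_XgY PXY $$ (x, j)) = 1" .
  qed
qed

lemma part1:
  fixes n m :: nat and PXY U Sig V :: "real mat" and eps :: real
  assumes nm: "n < m"
    and PXY_carrier: "PXY \<in> carrier_mat n m"
    and PXY_nonneg: "\<forall>x<n. \<forall>y<m. PXY $$ (x, y) \<ge> 0"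
    and PXY_sum: "(\<Sum>x<n. \<Sum>y<m. PXY $$ (x, y)) = 1"
    and PX_pos: "\<forall>x<n. marg_X PXY $ x > 0"
    and PY_pos: "\<forall>y<m. marg_Y PXY $ y > 0"
    and full_row_rank: "\<forall>c \<in> carrier_vec n.
                          transpose_mat (cond_XgY PXY) *\<^sub>v c = 0\<^sub>v m \<longrightarrow> c = 0\<^sub>v n"
    and P1_inv: "invertible_mat (first_block (cond_XgY PXY))"
    and svd: "is_svd (cond_XgY PXY) U Sig V"
    and eps_pos: "eps > 0"
  shows "\<forall>J \<in> carrier_vec n.
        (\<Sum>x<n. J $ x) = 0 \<longrightarrow> (\<Sum>x<n. \<bar>J $ x\<bar>) \<le> 1 \<longrightarrow>
        (\<forall>y \<in> S_set PXY V eps J. is_prob_vec y)"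
proof (intro ballI impI)
  have Pc: "cond_XgY PXY \<in> carrier_mat n m" using PXY_carrier unfolding cond_XgY_def by auto
  have nm': "n \<le> m" using nm by simp
  fix J :: "real vec" and y
  assume J: "J \<in> carrier_vec n" and sJ: "(\<Sum>x<n. J $ x) = 0"
    and y: "y \<in> S_set PXY V eps J"
  note K = S_key[OF nm' PXY_carrier PY_pos P1_inv svd J y]
  have Pentry: "\<And>x. x < n \<Longrightarrow>
      (cond_XgY PXY *\<^sub>v y) $ x = (\<Sum>j<m. cond_XgY PXY $$ (x, j) * y $ j)"
    using Pc K(1) by (auto simp: scalar_prod_def lessThan_atLeast0)
  have "(\<Sum>j<m. y $ j) = (\<Sum>j<m. y $ j * (\<Sum>x<n. cond_XgY PXY $$ (x, j)))"
    using K(4) by simp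
  also have "\<dots> = (\<Sum>j<m. \<Sum>x<n. cond_XgY PXY $$ (x, j) * y $ j)"
    by (simp add: sum_distrib_left mult.commute)
  also have "\<dots> = (\<Sum>x<n. \<Sum>j<m. cond_XgY PXY $$ (x, j) * y $ j)"
    by (rule sum.swap)
  also have "\<dots> = (\<Sum>x<n. (cond_XgY PXY *\<^sub>v y) $ x)"
    using Pentry by simp
  also have "\<dots> = (\<Sum>x<n. marg_X PXY $ x + eps * J $ x)"
    using K(3) J PXY_carrier by (auto simp: marg_X_def)
  also have "\<dots> = (\<Sum>x<n. marg_X PXY $ x) + eps * (\<Sum>x<n. J $ x)"
    by (simp add: sum.distrib sum_distrib_left)
  also have "\<dots> = 1"
  proof -
    have "(\<Sum>x<n. marg_X PXY $ x) = 1"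
      using PXY_sum PXY_carrier by (simp add: marg_X_def)
    then show ?thesis using sJ by simp
  qed
  finally have s1: "(\<Sum>j<m. y $ j) = 1" .
  have dy: "dim_vec y = m" using K(1) by (rule carrier_vecD)
  show "is_prob_vec y" unfolding is_prob_vec_def dy using K(2) s1 by blast
qed

lemma part2:
  fixes n m :: nat and PXY U Sig V :: "real mat" and eps :: real
  assumes nm: "n < m"
    and PXY_carrier: "PXY \<in> carrier_mat n m"
    and PXY_nonneg: "\<forall>x<n. \<forall>y<m. PXY $$ (x, y) \<ge> 0"
    and PXY_sum: "(\<Sum>x<n. \<Sum>y<m. PXY $$ (x, y)) = 1"
    and PX_pos: "\<forall>x<n. marg_X PXY $ x > 0"
    and PY_pos: "\<forall>y<m. marg_Y PXY $ y > 0"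
    and full_row_rank: "\<forall>c \<in> carrier_vec n.
                          transpose_mat (cond_XgY PXY) *\<^sub>v c = 0\<^sub>v m \<longrightarrow> c = 0\<^sub>v n"
    and P1_inv: "invertible_mat (first_block (cond_XgY PXY))"
    and svd: "is_svd (cond_XgY PXY) U Sig V"
    and eps_pos: "eps > 0"
  shows "\<forall>(Uset :: 'u set) (PYU :: nat \<Rightarrow> 'u \<Rightarrow> real) (Jf :: 'u \<Rightarrow> real vec).
        finite Uset \<longrightarrow>
        (\<forall>y<m. \<forall>u\<in>Uset. PYU y u \<ge> 0) \<longrightarrow>
        (\<forall>u\<in>Uset. (\<Sum>y<m. PYU y u) > 0) \<longrightarrow>
        (\<forall>y<m. (\<Sum>u\<in>Uset. PYU y u) = marg_Y PXY $ y) \<longrightarrow>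
        (\<forall>u\<in>Uset. Jf u \<in> carrier_vec n) \<longrightarrow>
        (\<forall>u\<in>Uset. (\<Sum>x<n. Jf u $ x) = 0) \<longrightarrow>
        (\<forall>x<n. (\<Sum>u\<in>Uset. (\<Sum>y<m. PYU y u) * Jf u $ x) = 0) \<longrightarrow>
        (\<forall>u\<in>Uset. (\<Sum>x<n. \<bar>Jf u $ x\<bar>) \<le> 1) \<longrightarrow>
        (\<forall>u\<in>Uset. vec m (\<lambda>y. PYU y u / (\<Sum>y'<m. PYU y' u)) \<in> S_set PXY V eps (Jf u)) \<longrightarrow>
        (\<forall>u\<in>Uset. \<forall>x<n.
           (\<Sum>y<m. cond_XgY PXY $$ (x, y) * PYU y u) / (\<Sum>y<m. PYU y u)
             - marg_X PXY $ x = eps * Jf u $ x)"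
proof (intro allI impI ballI)
  have Pc: "cond_XgY PXY \<in> carrier_mat n m" using PXY_carrier unfolding cond_XgY_def by auto
  have nm': "n \<le> m" using nm by simp
  fix Uset :: "'u set" and PYU :: "nat \<Rightarrow> 'u \<Rightarrow> real" and Jf :: "'u \<Rightarrow> real vec" and u x
  assume Jc: "\<forall>u\<in>Uset. Jf u \<in> carrier_vec n"
    and S: "\<forall>u\<in>Uset. vec m (\<lambda>y. PYU y u / (\<Sum>y'<m. PYU y' u)) \<in> S_set PXY V eps (Jf u)"
    and u: "u \<in> Uset" and x: "x < n"
  define yu where "yu = vec m (\<lambda>y. PYU y u / (\<Sum>y'<m. PYU y' u))"
  have Ju: "Jf u \<in> carrier_vec n" using Jc u by blast
  have Su: "yu \<in> S_set PXY V eps (Jf u)" using S u unfolding yu_def by blast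
  note K = S_key[OF nm' PXY_carrier PY_pos P1_inv svd Ju Su]
  have "(cond_XgY PXY *\<^sub>v yu) $ x = (\<Sum>j<m. cond_XgY PXY $$ (x, j) * yu $ j)"
    using Pc K(1) x by (auto simp: scalar_prod_def lessThan_atLeast0)
  also have "\<dots> = (\<Sum>y<m. cond_XgY PXY $$ (x, y) * PYU y u) / (\<Sum>y<m. PYU y u)"
    by (simp add: yu_def sum_divide_distrib)
  finally have A: "(cond_XgY PXY *\<^sub>v yu) $ x = (\<Sum>y<m. cond_XgY PXY $$ (x, y) * PYU y u) / (\<Sum>y<m. PYU y u)" .
  have B: "(cond_XgY PXY *\<^sub>v yu) $ x = marg_X PXY $ x + eps * Jf u $ x"
    using K(3) x Ju PXY_carrier by (auto simp: marg_X_def)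
  show "(\<Sum>y<m. cond_XgY PXY $$ (x, y) * PYU y u) / (\<Sum>y<m. PYU y u) - marg_X PXY $ x = eps * Jf u $ x"
    using A B by linarith
qed

theorem lemma3:
  fixes n m :: nat and PXY U Sig V :: "real mat" and eps :: real
  assumes nm: "n < m"
    and PXY_carrier: "PXY \<in> carrier_mat n m"
    and PXY_nonneg: "\<forall>x<n. \<forall>y<m. PXY $$ (x, y) \<ge> 0"
    and PXY_sum: "(\<Sum>x<n. \<Sum>y<m. PXY $$ (x, y)) = 1"
    and PX_pos: "\<forall>x<n. marg_X PXY $ x > 0"
    and PY_pos: "\<forall>y<m. marg_Y PXY $ y > 0"
    and full_row_rank: "\<forall>c \<in> carrier_vec n.
                          transpose_mat (cond_XgY PXY) *\<^sub>v c = 0\<^sub>v m \<longrightarrow> c = 0\<^sub>v n"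
    and P1_inv: "invertible_mat (first_block (cond_XgY PXY))"
    and svd: "is_svd (cond_XgY PXY) U Sig V"
    and eps_pos: "eps > 0"
  shows
    "(\<forall>J \<in> carrier_vec n.
        (\<Sum>x<n. J $ x) = 0 \<longrightarrow> (\<Sum>x<n. \<bar>J $ x\<bar>) \<le> 1 \<longrightarrow>
        (\<forall>y \<in> S_set PXY V eps J. is_prob_vec y))
     \<and>
     (\<forall>(Uset :: 'u set) (PYU :: nat \<Rightarrow> 'u \<Rightarrow> real) (Jf :: 'u \<Rightarrow> real vec).
        finite Uset \<longrightarrow>
        (\<forall>y<m. \<forall>u\<in>Uset. PYU y u \<ge> 0) \<longrightarrow>
        (\<forall>u\<in>Uset. (\<Sum>y<m. PYU y u) > 0) \<longrightarrow>
        (\<forall>y<m. (\<Sum>u\<in>Uset. PYU y u) = marg_Y PXY $ y) \<longrightarrow>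
        (\<forall>u\<in>Uset. Jf u \<in> carrier_vec n) \<longrightarrow>
        (\<forall>u\<in>Uset. (\<Sum>x<n. Jf u $ x) = 0) \<longrightarrow>
        (\<forall>x<n. (\<Sum>u\<in>Uset. (\<Sum>y<m. PYU y u) * Jf u $ x) = 0) \<longrightarrow>
        (\<forall>u\<in>Uset. (\<Sum>x<n. \<bar>Jf u $ x\<bar>) \<le> 1) \<longrightarrow>
        (\<forall>u\<in>Uset. vec m (\<lambda>y. PYU y u / (\<Sum>y'<m. PYU y' u)) \<in> S_set PXY V eps (Jf u)) \<longrightarrow>
        (\<forall>u\<in>Uset. \<forall>x<n.
           (\<Sum>y<m. cond_XgY PXY $$ (x, y) * PYU y u) / (\<Sum>y<m. PYU y u)
             - marg_X PXY $ x = eps * Jf u $ x))"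
  using part1[OF nm PXY_carrier PXY_nonneg PXY_sum PX_pos PY_pos full_row_rank P1_inv svd eps_pos]
    part2[OF nm PXY_carrier PXY_nonneg PXY_sum PX_pos PY_pos full_row_rank P1_inv svd eps_pos]
  by (rule conjI)

end
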